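(* Let $S$ be a semigroup and $p$ a strongly productive ultrafilter on $S$. If $p$ is multiplicatively isomorphic to an ordered union ultrafilter, then $p$ is sparse. In particular every ordered union ultrafilter is sparse.
   Context: For a sequence $\vec{x}=(x_n)_{n\in\omega}$ in $S$, $\mathrm{FP}(\vec{x})$ is the set of products $\prod_{i\in a}x_i$ (increasing order of indices), $a$ finite nonempty subset of $\omega$; $p$ is strongly productive if every $A\in p$ contains some $\mathrm{FP}(\vec{x})\in p$. $\mathbb{F}$ is the partial semigroup of finite nonempty subsets of $\omega$ where $ab$ is defined, and equals $a\cup b$, iff $\max a<\min b$; an ordered union ultrafilter is a strongly productive ultrafilter on $\mathbb{F}$ (every member contains $\mathrm{FP}(\vec{b})$, belonging to the ultrafilter, for some sequence $\vec{b}$ in $\mathbb{F}$ with $\max b_i<\min b_{i+1}$). $p$ is multiplicatively isomorphic to an ordered union ultrafilter if there is a sequence $\vec{x}$ in $S$ such that $f:\mathbb{F}\to\mathrm{FP}(\vec{x})$, $f(a)=\prod_{i\in a}x_i$, is injective and $\{f^{-1}[A]:A\in p\}$ is an ordered union ultrafilter. A strongly productive ultrafilter $p$ is sparse if for every $A\in p$ there are a sequence $\vec{x}=(x_n)_{n\in\omega}$ in $S$ and a subsequence $\vec{y}=(x_{k_n})_{n\in\omega}$ ($k_0<k_1<\cdots$) such that $\mathrm{FP}(\vec{y})\in p$, $\mathrm{FP}(\vec{x})\subseteq A$, and $\{k_n:n\in\omega\}$ is coinfinite in $\omega$. *)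

theory Defs
  imports Main
begin

definition is_ultrafilter :: "'a set \<Rightarrow> 'a set set \<Rightarrow> bool" where
  "is_ultrafilter U p \<longleftrightarrow>
     p \<subseteq> Pow U \<and> U \<in> p \<and> {} \<notin> p \<and>
     (\<forall>A B. A \<in> p \<and> B \<in> p \<longrightarrow> A \<inter> B \<in> p) \<and>
     (\<forall>A B. A \<in> p \<and> A \<subseteq> B \<and> B \<subseteq> U \<longrightarrow> B \<in> p) \<and>
     (\<forall>A. A \<subseteq> U \<longrightarrow> A \<in> p \<or> U - A \<in> p)"

fun lprod :: "'a::semigroup_mult list \<Rightarrow> 'a" where
  "lprod [] = undefined"
| "lprod [x] = x"
| "lprod (x # y # xs) = x * lprod (y # xs)"

text \<open>The finite nonempty subsets of omega: the underlying set of the partial semigroup F.\<close>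
definition FinSets :: "nat set set" where
  "FinSets = {a. finite a \<and> a \<noteq> {}}"

definition ordprod :: "(nat \<Rightarrow> 'a::semigroup_mult) \<Rightarrow> nat set \<Rightarrow> 'a" where
  "ordprod x a = lprod (map x (sorted_list_of_set a))"

definition FP :: "(nat \<Rightarrow> 'a::semigroup_mult) \<Rightarrow> 'a set" where
  "FP x = {ordprod x a | a. a \<in> FinSets}"

definition strongly_productive :: "'a::semigroup_mult set set \<Rightarrow> bool" where
  "strongly_productive p \<longleftrightarrow>
     is_ultrafilter UNIV p \<and> (\<forall>A\<in>p. \<exists>x. FP x \<in> p \<and> FP x \<subseteq> A)"

definition sparse :: "'a::semigroup_mult set set \<Rightarrow> bool" where
  "sparse p \<longleftrightarrow> strongly_productive p \<and>
     (\<forall>A\<in>p. \<exists>x k. strict_mono k \<and> FP (x \<circ> k) \<in> p \<and> FP x \<subseteq> A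
                 \<and> infinite (UNIV - range k))"

section \<open>The partial semigroup F (product ab = a \<union> b, defined iff max a < min b)\<close>

text \<open>Sequences in F whose finite products are all defined (block sequences).\<close>
definition block_seq :: "(nat \<Rightarrow> nat set) \<Rightarrow> bool" where
  "block_seq b \<longleftrightarrow> (\<forall>i. b i \<in> FinSets) \<and> (\<forall>i. Max (b i) < Min (b (Suc i)))"

text \<open>For a block sequence the (defined) product over a is the union.\<close>
definition FU :: "(nat \<Rightarrow> nat set) \<Rightarrow> nat set set" where
  "FU b = {(\<Union>i\<in>a. b i) | a. a \<in> FinSets}"

definition ordered_union_uf :: "nat set set set \<Rightarrow> bool" where
  "ordered_union_uf q \<longleftrightarrow> is_ultrafilter FinSets q \<and>
     (\<forall>A\<in>q. \<exists>b. block_seq b \<and> FU b \<in> q \<and> FU b \<subseteq> A)"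

definition sparse_F :: "nat set set set \<Rightarrow> bool" where
  "sparse_F q \<longleftrightarrow> ordered_union_uf q \<and>
     (\<forall>A\<in>q. \<exists>b k. block_seq b \<and> strict_mono k \<and> FU (b \<circ> k) \<in> q \<and> FU b \<subseteq> A
                 \<and> infinite (UNIV - range k))"

definition mult_iso_OU :: "'a::semigroup_mult set set \<Rightarrow> bool" where
  "mult_iso_OU p \<longleftrightarrow> (\<exists>x. inj_on (ordprod x) FinSets \<and>
     ordered_union_uf ((\<lambda>A. {a \<in> FinSets. ordprod x a \<in> A}) ` p))"

end

theory Submission imports Defs "HOL-Library.Infinite_Set" begin

lemma lprod_append: "xs \<noteq> [] \<Longrightarrow> ys \<noteq> [] \<Longrightarrow> lprod (xs @ ys) = lprod xs * lprod ys"
proof (induction xs rule: lprod.induct)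
  case 1 then show ?case by simp
next
  case (2 x) then show ?case by (cases ys) auto
next
  case (3 x y xs) then show ?case by (simp add: mult.assoc)
qed

lemma sl_union:
  fixes A B :: "nat set"
  assumes "finite A" "finite B" "\<forall>a\<in>A. \<forall>b\<in>B. a < b"
  shows "sorted_list_of_set (A \<union> B) = sorted_list_of_set A @ sorted_list_of_set B"
proof -
  have "sorted_wrt (<) (sorted_list_of_set A @ sorted_list_of_set B) \<and>
        set (sorted_list_of_set A @ sorted_list_of_set B) = A \<union> B \<and>
        length (sorted_list_of_set A @ sorted_list_of_set B) = card (A \<union> B)"
  proof -
    have "A \<inter> B = {}" using assms(3) by fastforce
    then show ?thesis using assms by (auto simp: sorted_wrt_append card_Un_disjoint)
  qed
  then show ?thesis using assms
    by (metis finite_UnI sorted_list_of_set_unique sorted_wrt_map)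
qed

lemma ordprod_union:
  fixes A B :: "nat set"
  assumes "finite A" "finite B" "A \<noteq> {}" "B \<noteq> {}" "\<forall>a\<in>A. \<forall>b\<in>B. a < b"
  shows "ordprod x (A \<union> B) = ordprod x A * ordprod x B"
  using assms by (simp add: ordprod_def sl_union lprod_append)

lemma blk_lt_aux:
  assumes "\<forall>i. c i \<in> FinSets" "\<forall>i. Max (c i) < Min (c (Suc i))"
  shows "i < j \<Longrightarrow> Max (c i) < Min (c j)"
proof (induction j)
  case 0 then show ?case by simp
next
  case (Suc j)
  have "Min (c j) \<le> Max (c j)" using assms(1) by (simp add: FinSets_def)
  have "Max (c j) < Min (c (Suc j))" using assms(2) by blast
  then show ?case using Suc \<open>Min (c j) \<le> Max (c j)\<close> by (cases "i = j") force+
qed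

lemma blk_lt:
  assumes "\<forall>i. c i \<in> FinSets" "\<forall>i. Max (c i) < Min (c (Suc i))"
    and "i < j" "u \<in> c i" "v \<in> c j"
  shows "u < v"
proof -
  have "u \<le> Max (c i)" "Min (c j) \<le> v" using assms by (auto simp: FinSets_def)
  then show ?thesis using blk_lt_aux[OF assms(1,2,3)] by linarith
qed

lemma ordprod_blocks:
  assumes fs: "\<forall>i. c i \<in> FinSets" and lt: "\<forall>i j u v. i < j \<longrightarrow> u \<in> c i \<longrightarrow> v \<in> c j \<longrightarrow> u < v"
    and a: "a \<in> FinSets"
  shows "ordprod (\<lambda>n. ordprod x (c n)) a = ordprod x (\<Union>i\<in>a. c i)"
proof -
  have "finite a" using a by (simp add: FinSets_def)
  then have "a \<noteq> {} \<longrightarrow> ordprod (\<lambda>n. ordprod x (c n)) a = ordprod x (\<Union>i\<in>a. c i)"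
  proof (induction a rule: finite_linorder_max_induct)
    case empty then show ?case by simp
  next
    case (insert b A)
    show ?case
    proof (cases "A = {}")
      case True then show ?thesis by (simp add: ordprod_def)
    next
      case False
      have f: "finite (\<Union>i\<in>A. c i)" "(\<Union>i\<in>A. c i) \<noteq> {}" "finite (c b)" "c b \<noteq> {}"
        using fs insert False by (auto simp: FinSets_def)
      have l: "\<forall>u\<in>(\<Union>i\<in>A. c i). \<forall>v\<in>c b. u < v" using lt insert by blast
      have "ordprod (\<lambda>n. ordprod x (c n)) (insert b A) = ordprod (\<lambda>n. ordprod x (c n)) (A \<union> {b})"
        by simp
      also have "\<dots> = ordprod (\<lambda>n. ordprod x (c n)) A * ordprod (\<lambda>n. ordprod x (c n)) {b}"
        using insert False by (intro ordprod_union) auto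
      also have "\<dots> = ordprod x (\<Union>i\<in>A. c i) * ordprod x (c b)"
        using insert False by (simp add: ordprod_def)
      also have "\<dots> = ordprod x ((\<Union>i\<in>A. c i) \<union> c b)"
        using f l by (simp add: ordprod_union)
      also have "(\<Union>i\<in>A. c i) \<union> c b = (\<Union>i\<in>insert b A. c i)" by auto
      finally show ?thesis by simp
    qed
  qed
  then show ?thesis using a by (simp add: FinSets_def)
qed


lemma FU_sub:
  assumes "\<forall>i. c i \<in> FinSets"
  shows "FU c \<subseteq> FinSets"
  using assms by (auto simp: FU_def FinSets_def)

lemma blk_disj:
  assumes "block_seq c" "i \<noteq> j"
  shows "c i \<inter> c j = {}"
proof -
  have b: "\<forall>i. c i \<in> FinSets" "\<forall>i. Max (c i) < Min (c (Suc i))" using assms(1) by (auto simp: block_seq_def)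
  show ?thesis
  proof (cases "i < j")
    case True then show ?thesis using blk_lt[OF b] by fastforce
  next
    case False then have "j < i" using assms(2) by simp
    then show ?thesis using blk_lt[OF b] by fastforce
  qed
qed

lemma ou_sparse:
  assumes ou: "ordered_union_uf q"
  shows "sparse_F q"
  unfolding sparse_F_def
proof (intro conjI ballI)
  show "ordered_union_uf q" by fact
  fix A assume A: "A \<in> q"
  have uf: "is_ultrafilter FinSets q" using ou by (simp add: ordered_union_uf_def)
  have up: "\<And>X Y. X \<in> q \<Longrightarrow> X \<subseteq> Y \<Longrightarrow> Y \<subseteq> FinSets \<Longrightarrow> Y \<in> q"
    and int: "\<And>X Y. X \<in> q \<Longrightarrow> Y \<in> q \<Longrightarrow> X \<inter> Y \<in> q"
    and cmp: "\<And>X. X \<subseteq> FinSets \<Longrightarrow> X \<notin> q \<Longrightarrow> FinSets - X \<in> q"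
    using uf unfolding is_ultrafilter_def by blast+
  obtain c where cb: "block_seq c" and cq: "FU c \<in> q" and cA: "FU c \<subseteq> A"
    using ou A by (auto simp: ordered_union_uf_def)
  have cfs: "\<forall>i. c i \<in> FinSets" and cst: "\<forall>i. Max (c i) < Min (c (Suc i))"
    using cb by (auto simp: block_seq_def)
  note clt = blk_lt[OF cfs cst]
  have cne: "c i \<noteq> {}" "finite (c i)" for i using cfs by (auto simp: FinSets_def)
  have FUc: "FU c \<subseteq> FinSets" using FU_sub[OF cfs] .
  define N where "N = {a \<in> FU c. \<exists>i. c i \<inter> a = {} \<and> Min a < Min (c i) \<and> Max (c i) < Max a}"
  have Nq: "N \<in> q"
  proof (rule ccontr)
    assume "N \<notin> q"
    moreover have "N \<subseteq> FinSets" using FUc unfolding N_def by blast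
    ultimately have "FinSets - N \<in> q" using cmp by blast
    then have "FU c \<inter> (FinSets - N) \<in> q" using int cq by blast
    then obtain d where db: "block_seq d" and dq: "FU d \<in> q" and dI: "FU d \<subseteq> FU c \<inter> (FinSets - N)"
      using ou by (auto simp: ordered_union_uf_def)
    have dfs: "\<forall>i. d i \<in> FinSets" and dst: "\<forall>i. Max (d i) < Min (d (Suc i))"
      using db by (auto simp: block_seq_def)
    note dlt = blk_lt[OF dfs dst]
    have dne: "d i \<noteq> {}" "finite (d i)" for i using dfs by (auto simp: FinSets_def)
    have "d 1 = (\<Union>i\<in>{1::nat}. d i)" by simp
    then have "d 1 \<in> FU d" unfolding FU_def FinSets_def by blast
    then have "d 1 \<in> FU c" using dI by blast
    then obtain t where t: "t \<in> FinSets" "d 1 = (\<Union>i\<in>t. c i)" by (auto simp: FU_def)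
    then obtain i where "i \<in> t" by (auto simp: FinSets_def)
    then have ci: "c i \<subseteq> d 1" using t by auto
    define e where "e = d 0 \<union> d 2"
    have "e = (\<Union>i\<in>{0::nat,2}. d i)" by (simp add: e_def)
    then have eFU: "e \<in> FU d" unfolding FU_def FinSets_def by blast
    then have eFUc: "e \<in> FU c" and eN: "e \<notin> N" using dI by auto
    have fe: "finite e" "e \<noteq> {}" using dne by (auto simp: e_def)
    have mci: "Min (c i) \<in> c i" "Max (c i) \<in> c i" using cne[of i] by auto
    have md: "Min (d 0) \<in> d 0" "Min (d 2) \<in> d 2" using dne by auto
    have "c i \<inter> e = {}"
    proof -
      have "\<forall>u\<in>c i. \<forall>v\<in>d 0. v < u" using ci dlt[of 0 1] by auto
      moreover have "\<forall>u\<in>c i. \<forall>v\<in>d 2. u < v" using ci dlt[of 1 2] by auto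
      ultimately show ?thesis unfolding e_def by (meson Int_emptyI UnE less_asym)
    qed
    moreover have "Min e < Min (c i)"
    proof -
      have "Min e \<le> Min (d 0)" using fe md(1) by (simp add: e_def)
      moreover have "Min (d 0) < Min (c i)"
        using dlt[of 0 1, OF _ md(1)] ci mci(1) by auto
      ultimately show ?thesis by simp
    qed
    moreover have "Max (c i) < Max e"
    proof -
      have "Min (d 2) \<le> Max e" using fe md(2) by (simp add: e_def)
      moreover have "Max (c i) < Min (d 2)"
        using dlt[of 1 2, OF _ _ md(2)] ci mci(2) by auto
      ultimately show ?thesis by simp
    qed
    ultimately have "e \<in> N" using eFUc unfolding N_def by blast
    then show False using eN by blast
  qed
  obtain d where db: "block_seq d" and dq: "FU d \<in> q" and dN: "FU d \<subseteq> N"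
    using ou Nq by (auto simp: ordered_union_uf_def)
  have dfs: "\<forall>i. d i \<in> FinSets" and dst: "\<forall>i. Max (d i) < Min (d (Suc i))"
    using db by (auto simp: block_seq_def)
  note dlt = blk_lt[OF dfs dst]
  have dne: "d i \<noteq> {}" "finite (d i)" for i using dfs by (auto simp: FinSets_def)
  have dmm: "Min (d j) \<in> d j" "Max (d j) \<in> d j" for j using dne[of j] by auto
  have cmm: "Min (c j) \<in> c j" "Max (c j) \<in> c j" for j using cne[of j] by auto
  have dFU: "d j \<in> FU d" for j
  proof -
    have "d j = (\<Union>i\<in>{j}. d i)" by simp
    then show ?thesis unfolding FU_def FinSets_def by blast
  qed
  have dNj: "d j \<in> N" for j using dFU dN by blast
  have "\<forall>j. \<exists>h. c h \<inter> d j = {} \<and> Min (d j) < Min (c h) \<and> Max (c h) < Max (d j)"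
    using dNj unfolding N_def by simp
  then obtain h where h: "\<And>j. c (h j) \<inter> d j = {}" "\<And>j. Min (d j) < Min (c (h j))"
      "\<And>j. Max (c (h j)) < Max (d j)" by metis
  have "\<forall>j. \<exists>t. t \<in> FinSets \<and> d j = (\<Union>i\<in>t. c i)"
  proof
    fix j have "d j \<in> FU c" using dNj unfolding N_def by simp
    then show "\<exists>t. t \<in> FinSets \<and> d j = (\<Union>i\<in>t. c i)" unfolding FU_def by blast
  qed
  then obtain T where T: "\<And>j. T j \<in> FinSets" "\<And>j. d j = (\<Union>i\<in>T j. c i)" by metis
  define K where "K = (\<Union>j. T j)"
  have hK: "h j \<notin> K" for j
  proof
    assume "h j \<in> K"
    then obtain m where m: "h j \<in> T m" unfolding K_def by blast
    then have sub: "c (h j) \<subseteq> d m" using T(2)[of m] by auto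
    consider "m = j" | "m < j" | "j < m" by linarith
    then show False
    proof cases
      case 1 then show ?thesis using sub h(1)[of j] cne[of "h j"] by blast
    next
      case 2
      have "Min (c (h j)) \<in> d m" using sub cmm by blast
      then have "Min (c (h j)) < Min (d j)" using dlt[OF 2 _ dmm(1)] by blast
      then show ?thesis using h(2)[of j] by simp
    next
      case 3
      have "Max (c (h j)) \<in> d m" using sub cmm by blast
      then have "Max (d j) < Max (c (h j))" using dlt[OF 3 dmm(2)] by blast
      then show ?thesis using h(3)[of j] by simp
    qed
  qed
  have injh: "inj h"
  proof (rule injI)
    fix j j' assume eq: "h j = h j'"
    show "j = j'"
    proof (rule ccontr)
      assume "j \<noteq> j'"
      then consider "j < j'" | "j' < j" by linarith
      then show False
      proof cases
        case 1
        have "Min (c (h j)) \<le> Max (c (h j))" using cne by simp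
        then have "Min (c (h j)) < Max (d j)" using h(3)[of j] by simp
        moreover have "Max (d j) < Min (d j')" using dlt[OF 1 dmm(2) dmm(1)] .
        ultimately show ?thesis using h(2)[of j'] eq by simp
      next
        case 2
        have "Min (c (h j')) \<le> Max (c (h j'))" using cne by simp
        then have "Min (c (h j')) < Max (d j')" using h(3)[of j'] by simp
        moreover have "Max (d j') < Min (d j)" using dlt[OF 2 dmm(2) dmm(1)] .
        ultimately show ?thesis using h(2)[of j] eq by simp
      qed
    qed
  qed
  have infH: "infinite (range h)" using injh finite_imageD infinite_UNIV_nat by blast
  have "range h \<subseteq> UNIV - K" using hK by blast
  then have coinf: "infinite (UNIV - K)"
    using infH finite_subset by blast
  have "\<forall>j. \<exists>i. i \<in> T j" using T(1) by (auto simp: FinSets_def)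
  then obtain g where g: "\<And>j. g j \<in> T j" by metis
  have injg: "inj g"
  proof (rule injI)
    fix j j' assume eq: "g j = g j'"
    have "c (g j) \<subseteq> d j" "c (g j') \<subseteq> d j'" using g T(2) by auto
    then have "c (g j) \<subseteq> d j \<inter> d j'" using eq by auto
    moreover have "j \<noteq> j' \<Longrightarrow> d j \<inter> d j' = {}" using blk_disj[OF db] by blast
    ultimately show "j = j'" using cne[of "g j"] by blast
  qed
  have infK: "infinite K"
  proof
    assume "finite K"
    moreover have "range g \<subseteq> K" using g unfolding K_def by blast
    ultimately have "finite (range g)" using finite_subset by blast
    then show False using injg finite_imageD infinite_UNIV_nat by blast
  qed
  define k where "k = enumerate K"
  have km: "strict_mono k" and kr: "range k = K"
    using infK by (auto simp: k_def strict_mono_enumerate range_enumerate)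
  have injk: "inj k" using km strict_mono_imp_inj_on by blast
  have ckfs: "\<forall>i. (c \<circ> k) i \<in> FinSets" using cfs by simp
  have sub1: "FU d \<subseteq> FU (c \<circ> k)"
  proof
    fix z assume "z \<in> FU d"
    then obtain a where a: "a \<in> FinSets" "z = (\<Union>j\<in>a. d j)" by (auto simp: FU_def)
    define U where "U = (\<Union>j\<in>a. T j)"
    have U: "U \<subseteq> K" unfolding U_def K_def by blast
    have finU: "finite U" "U \<noteq> {}" using a(1) T(1) unfolding U_def FinSets_def by auto
    define a' where "a' = k -` U"
    have "finite a'" unfolding a'_def using finU injk by (simp add: finite_vimageI)
    moreover have "a' \<noteq> {}" unfolding a'_def using finU U kr by blast
    moreover have "z = (\<Union>n\<in>a'. (c \<circ> k) n)"
    proof -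
      have "z = (\<Union>i\<in>U. c i)" using a T(2) unfolding U_def by auto
      also have "U = k ` a'" unfolding a'_def using U kr by blast
      finally show ?thesis by simp
    qed
    ultimately show "z \<in> FU (c \<circ> k)" unfolding FU_def FinSets_def by blast
  qed
  have "FU (c \<circ> k) \<in> q" using up[OF dq sub1 FU_sub[OF ckfs]] .
  moreover have "infinite (UNIV - range k)" using coinf kr by simp
  ultimately show "\<exists>b k. block_seq b \<and> strict_mono k \<and> FU (b \<circ> k) \<in> q \<and> FU b \<subseteq> A
                 \<and> infinite (UNIV - range k)"
    using cb km cA by blast
qed

theorem mainTheorem15:
  shows "(\<forall>p :: 'a::semigroup_mult set set.
            strongly_productive p \<and> mult_iso_OU p \<longrightarrow> sparse p)
         \<and> (\<forall>q. ordered_union_uf q \<longrightarrow> sparse_F q)"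
proof (intro conjI allI impI)
  fix q :: "nat set set set" assume "ordered_union_uf q" then show "sparse_F q" by (rule ou_sparse)
next
  fix p :: "'a::semigroup_mult set set"
  assume "strongly_productive p \<and> mult_iso_OU p"
  then have sp: "strongly_productive p" and mi: "mult_iso_OU p" by auto
  have puf: "is_ultrafilter UNIV p" using sp by (simp add: strongly_productive_def)
  have pcmp: "\<And>X. X \<notin> p \<Longrightarrow> UNIV - X \<in> p" using puf unfolding is_ultrafilter_def by blast
  obtain x where ouq: "ordered_union_uf ((\<lambda>A. {a \<in> FinSets. ordprod x a \<in> A}) ` p)"
    using mi by (auto simp: mult_iso_OU_def)
  define q where "q = (\<lambda>A. {a \<in> FinSets. ordprod x a \<in> A}) ` p"
  have ouq': "ordered_union_uf q" using ouq by (simp add: q_def)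
  have quf: "is_ultrafilter FinSets q" using ouq' by (simp add: ordered_union_uf_def)
  have qint: "\<And>X Y. X \<in> q \<Longrightarrow> Y \<in> q \<Longrightarrow> X \<inter> Y \<in> q" and qe: "{} \<notin> q"
    using quf unfolding is_ultrafilter_def by blast+
  have spF: "sparse_F q" using ouq' by (rule ou_sparse)
  show "sparse p" unfolding sparse_def
  proof (intro conjI ballI)
    show "strongly_productive p" by fact
    fix A assume A: "A \<in> p"
    have A': "{a \<in> FinSets. ordprod x a \<in> A} \<in> q" using A unfolding q_def by (rule imageI)
    obtain c k where cb: "block_seq c" and km: "strict_mono k" and ckq: "FU (c \<circ> k) \<in> q"
      and cA: "FU c \<subseteq> {a \<in> FinSets. ordprod x a \<in> A}" and co: "infinite (UNIV - range k)"
      using spF A' unfolding sparse_F_def by blast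
    have cfs: "\<forall>i. c i \<in> FinSets" and cst: "\<forall>i. Max (c i) < Min (c (Suc i))"
      using cb by (auto simp: block_seq_def)
    have clt: "\<forall>i j u v. i < j \<longrightarrow> u \<in> c i \<longrightarrow> v \<in> c j \<longrightarrow> u < v"
      using blk_lt[OF cfs cst] by blast
    have ckfs: "\<forall>i. (c \<circ> k) i \<in> FinSets" using cfs by simp
    have cklt: "\<forall>i j u v. i < j \<longrightarrow> u \<in> (c \<circ> k) i \<longrightarrow> v \<in> (c \<circ> k) j \<longrightarrow> u < v"
      using clt km unfolding strict_mono_def by (metis comp_apply)
    define y where "y = (\<lambda>n. ordprod x (c n))"
    have "FP y \<subseteq> A"
    proof
      fix z assume "z \<in> FP y"
      then obtain a where a: "a \<in> FinSets" "z = ordprod y a" by (auto simp: FP_def)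
      then have z: "z = ordprod x (\<Union>i\<in>a. c i)" using ordprod_blocks[OF cfs clt a(1)] by (simp add: y_def)
      have "(\<Union>i\<in>a. c i) \<in> FU c" using a(1) by (auto simp: FU_def)
      then show "z \<in> A" using cA z by blast
    qed
    moreover have FPE: "FP (y \<circ> k) = ordprod x ` FU (c \<circ> k)"
    proof -
      have yk: "y \<circ> k = (\<lambda>n. ordprod x ((c \<circ> k) n))" by (simp add: y_def o_def)
      have "FP (y \<circ> k) = {ordprod x (\<Union>i\<in>a. (c \<circ> k) i) | a. a \<in> FinSets}"
        unfolding FP_def yk using ordprod_blocks[OF ckfs cklt] by metis
      also have "\<dots> = ordprod x ` FU (c \<circ> k)" unfolding FU_def by blast
      finally show ?thesis .
    qed
    have "FP (y \<circ> k) \<in> p"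
    proof (rule ccontr)
      assume "FP (y \<circ> k) \<notin> p"
      then have "UNIV - FP (y \<circ> k) \<in> p" by (rule pcmp)
      then have "{a \<in> FinSets. ordprod x a \<in> UNIV - FP (y \<circ> k)} \<in> q" unfolding q_def by (rule imageI)
      then have "FU (c \<circ> k) \<inter> {a \<in> FinSets. ordprod x a \<in> UNIV - FP (y \<circ> k)} \<in> q"
        using qint ckq by blast
      moreover have "FU (c \<circ> k) \<inter> {a \<in> FinSets. ordprod x a \<in> UNIV - FP (y \<circ> k)} = {}"
        using FPE by blast
      ultimately show False using qe by simp
    qed
    ultimately show "\<exists>x k. strict_mono k \<and> FP (x \<circ> k) \<in> p \<and> FP x \<subseteq> A \<and> infinite (UNIV - range k)"
      using km co by blast
  qed
qed

end
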